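(* Consider the problem of minimizing $\Phi(x_1,x_2):=\theta_1(x_1)+h(x_1,x_2)+\theta_2(x_2)$ with $h=h^+-h^-$, and let $\{(x_1^k,x_2^k)\}_{k\in\mathbb{N}}$ be a sequence generated by the inertial Bregman alternating linearized minimization algorithm described in the context, under Assumptions A1, A2 and A3 stated in the context (with the constants $\varepsilon,\delta_1,\delta_2$ defined there). Set $w_1^k=(x_1^k,x_2^k)$, $w_2^k=(x_1^{k-1},x_2^{k-1})$ and $\mathbf{w}^k=(w_1^k,w_2^k)$. Then the sequence $\{\Theta_{\delta_1,\delta_2}(\mathbf{w}^k)\}_{k\in\mathbb{N}}$ is nonincreasing; in particular, for all $k\in\mathbb{N}$, $$\Theta_{\delta_1,\delta_2}(\mathbf{w}^{k+1})-\Theta_{\delta_1,\delta_2}(\mathbf{w}^k)\le -\delta\,\|\mathbf{w}^{k+1}-\mathbf{w}^k\|^2,$$ where $\delta=\frac{\varepsilon}{2}\min\{\delta_1,\delta_2\}>0$.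
   Context: Let $n_1,n_2\ge 1$. Let $\theta_1:\mathbb{R}^{n_1}\to(-\infty,+\infty]$, $\theta_2:\mathbb{R}^{n_2}\to(-\infty,+\infty]$, and let $h^+,h^-:\mathbb{R}^{n_1}\times\mathbb{R}^{n_2}\to\mathbb{R}$ be continuously differentiable, $h=h^+-h^-$, $\Phi(x_1,x_2)=\theta_1(x_1)+h(x_1,x_2)+\theta_2(x_2)$. Bregman distance: for a strongly convex, continuously differentiable $\psi$, $D_\psi(x,y)=\psi(x)-\psi(y)-\langle\nabla\psi(y),x-y\rangle$. For a function $g$, $\mu>0$ and a kernel $\psi$, define $\mathcal{P}^{\psi}_{g,\mu}(u;v):=\arg\min_x\{g(x)+\langle x,v\rangle+\mu D_\psi(x,u)\}$. For each $k\in\mathbb{N}$, $\psi_k:\mathbb{R}^{n_1}\to\mathbb{R}$ and $\varphi_k:\mathbb{R}^{n_2}\to\mathbb{R}$ are strongly convex continuously differentiable kernels whose strong convexity moduli are at least $\rho_1>0$ and $\rho_2>0$ respectively (over all $k$). Algorithm: choose parameters $\alpha_i^k,\beta_i^k,\tau_i^k$ ($i=1,2$), an initial point $x^0=(x_1^0,x_2^0)$, and set $x^{-1}:=x^0$. For $k=0,1,2,\dots$: $y_1^k=x_1^k+\alpha_1^k(x_1^k-x_1^{k-1})$, $z_1^k=x_1^k+\beta_1^k(x_1^k-x_1^{k-1})$, $x_1^{k+1}\in\mathcal{P}^{\psi_k}_{\theta_1+h^+(\cdot,x_2^k),\tau_1^k}(x_1^k;t_1^k)$ with $t_1^k=-\nabla_{x_1}h^-(z_1^k,x_2^k)-\tau_1^k(y_1^k-x_1^k)$;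 $y_2^k=x_2^k+\alpha_2^k(x_2^k-x_2^{k-1})$, $z_2^k=x_2^k+\beta_2^k(x_2^k-x_2^{k-1})$, $x_2^{k+1}\in\mathcal{P}^{\varphi_k}_{\theta_2+h^+(x_1^{k+1},\cdot),\tau_2^k}(x_2^k;t_2^k)$ with $t_2^k=-\nabla_{x_2}h^-(x_1^{k+1},z_2^k)-\tau_2^k(y_2^k-x_2^k)$. Assumption A1: $\theta_1,\theta_2$ are proper lower semicontinuous, and $\Phi$ is bounded from below. Assumption A2: (i) for every fixed $x_2$, $\nabla_{x_1}h^-(\cdot,x_2)$ is globally Lipschitz with modulus $L_1^-(x_2)$; for every fixed $x_1$, $\nabla_{x_2}h^-(x_1,\cdot)$ is globally Lipschitz with modulus $L_2^-(x_1)$. (ii) There exist $\lambda_i^-,\lambda_i^+>0$ ($i=1,2$) with $\inf_k L_1^-(x_2^k)\ge\lambda_1^-$, $\inf_k L_2^-(x_1^k)\ge\lambda_2^-$, $\sup_k L_1^-(x_2^k)\le\lambda_1^+$, $\sup_k L_2^-(x_1^k)\le\lambda_2^+$. (iii) $h$ is continuously differentiable and $\nabla h=\nabla h^+-\nabla h^-$ is Lipschitz continuous on bounded subsets of $\mathbb{R}^{n_1}\times\mathbb{R}^{n_2}$. Assumption A3: for a fixed $\varepsilon>0$: (i) there exist $0<\bar\alpha_i<\frac{(1-\varepsilon)\rho_i}{2}$ with $\alpha_i^k\in[0,\bar\alpha_i]$, and $\bar\beta_i>0$ with $\beta_i^k\in[0,\bar\beta_i]$, $i=1,2$, for all $k$;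 (ii) $\tau_1^k=\frac{(1+\varepsilon)\delta_1+(1+\beta_1^k)L_1^-(x_2^k)}{\rho_1-\alpha_1^k}$, $\tau_2^k=\frac{(1+\varepsilon)\delta_2+(1+\beta_2^k)L_2^-(x_1^{k+1})}{\rho_2-\alpha_2^k}$, where $\delta_1=\frac{\bar\alpha_1+\bar\beta_1\rho_1}{(1-\varepsilon)\rho_1-2\bar\alpha_1}\lambda_1^+$ and $\delta_2=\frac{\bar\alpha_2+\bar\beta_2\rho_2}{(1-\varepsilon)\rho_2-2\bar\alpha_2}\lambda_2^+$. Auxiliary function: for $\mathbf{w}=(w_1,w_2)$ with $w_1=(w_{11},w_{12}),w_2=(w_{21},w_{22})\in\mathbb{R}^{n_1}\times\mathbb{R}^{n_2}$, $\Theta_{\delta_1,\delta_2}(\mathbf{w}):=\Phi(w_1)+\frac{\delta_1}{2}\|w_{11}-w_{21}\|^2+\frac{\delta_2}{2}\|w_{12}-w_{22}\|^2$. *)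

theory Defs
  imports "HOL-Analysis.Analysis"
begin

definition C1_with_grad :: "('a::real_inner \<Rightarrow> real) \<Rightarrow> ('a \<Rightarrow> 'a) \<Rightarrow> bool" where
  "C1_with_grad f g \<longleftrightarrow> (\<forall>x. GDERIV f x :> g x) \<and> continuous_on UNIV g"

definition strongly_convex_mod :: "real \<Rightarrow> ('a::real_normed_vector \<Rightarrow> real) \<Rightarrow> bool" where
  "strongly_convex_mod \<rho> f \<longleftrightarrow> convex_on UNIV (\<lambda>x. f x - \<rho> / 2 * (norm x)\<^sup>2)"

definition bregman :: "('a::real_inner \<Rightarrow> real) \<Rightarrow> ('a \<Rightarrow> 'a) \<Rightarrow> 'a \<Rightarrow> 'a \<Rightarrow> real" where
  "bregman \<psi> g\<psi> x y = \<psi> x - \<psi> y - inner (g\<psi> y) (x - y)"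

definition bregman_prox ::
  "('a::real_inner \<Rightarrow> ereal) \<Rightarrow> real \<Rightarrow> ('a \<Rightarrow> real) \<Rightarrow> ('a \<Rightarrow> 'a) \<Rightarrow> 'a \<Rightarrow> 'a \<Rightarrow> 'a set" where
  "bregman_prox g \<mu> \<psi> g\<psi> u v =
     {x. \<forall>y. g x + ereal (inner x v + \<mu> * bregman \<psi> g\<psi> x u)
              \<le> g y + ereal (inner y v + \<mu> * bregman \<psi> g\<psi> y u)}"

definition proper_fun :: "('a \<Rightarrow> ereal) \<Rightarrow> bool" where
  "proper_fun f \<longleftrightarrow> (\<forall>x. f x \<noteq> -\<infinity>) \<and> (\<exists>x. f x \<noteq> \<infinity>)"

definition lsc_fun :: "('a::topological_space \<Rightarrow> ereal) \<Rightarrow> bool" where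
  "lsc_fun f \<longleftrightarrow> (\<forall>x X. X \<longlonglongrightarrow> x \<longrightarrow> f x \<le> liminf (\<lambda>n. f (X n)))"

definition Phi :: "('a \<Rightarrow> ereal) \<Rightarrow> ('b \<Rightarrow> ereal) \<Rightarrow> ('a \<times> 'b \<Rightarrow> real) \<Rightarrow> 'a \<times> 'b \<Rightarrow> ereal" where
  "Phi \<theta>1 \<theta>2 h z = \<theta>1 (fst z) + ereal (h z) + \<theta>2 (snd z)"

definition Theta ::
  "('a::real_normed_vector \<times> 'b::real_normed_vector \<Rightarrow> ereal) \<Rightarrow> real \<Rightarrow> real \<Rightarrow> ('a \<times> 'b) \<times> ('a \<times> 'b) \<Rightarrow> ereal" where
  "Theta \<Phi> \<delta>1 \<delta>2 w = \<Phi> (fst w) +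
     ereal (\<delta>1 / 2 * (norm (fst (fst w) - fst (snd w)))\<^sup>2 + \<delta>2 / 2 * (norm (snd (fst w) - snd (snd w)))\<^sup>2)"

end

theory Submission
  imports Defs
begin

lemma line_deriv:
  fixes f :: "'c::real_inner \<Rightarrow> real"
  assumes "\<And>u. (f has_derivative (\<lambda>h. inner h (g u))) (at u)"
  shows "((\<lambda>t. f (x + t *\<^sub>R d)) has_real_derivative (inner d (g (x + s *\<^sub>R d)))) (at s)"
proof -
  have l: "((\<lambda>t. x + t *\<^sub>R d) has_derivative (\<lambda>t. t *\<^sub>R d)) (at s)"
    by (auto intro!: derivative_eq_intros)
  have "((\<lambda>t. f (x + t *\<^sub>R d)) has_derivative (\<lambda>t. inner (t *\<^sub>R d) (g (x + s *\<^sub>R d)))) (at s)"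
    using has_derivative_compose[OF l assms] by (simp add: o_def)
  then show ?thesis
    by (rule has_derivative_imp_has_field_derivative) simp
qed

lemma convex_grad:
  fixes F :: "'c::real_inner \<Rightarrow> real"
  assumes cv: "convex_on UNIV F" and d: "\<And>u. (F has_derivative (\<lambda>h. inner h (G u))) (at u)"
  shows "F y \<ge> F x + inner (G x) (y - x)"
proof -
  define \<phi> where "\<phi> t = F (x + t *\<^sub>R (y - x))" for t
  have "convex_on UNIV \<phi>"
  proof (rule convex_onI)
    fix t a b :: real assume t: "0 < t" "t < 1"
    have e: "x + ((1 - t) * a + t * b) *\<^sub>R (y - x) = (1 - t) *\<^sub>R (x + a *\<^sub>R (y - x)) + t *\<^sub>R (x + b *\<^sub>R (y - x))"
      by (simp add: algebra_simps)
    show "\<phi> ((1 - t) *\<^sub>R a + t *\<^sub>R b) \<le> (1 - t) * \<phi> a + t * \<phi> b"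
      unfolding \<phi>_def using convex_onD[OF cv, of t] t by (simp add: e)
  qed simp
  moreover have "(\<phi> has_real_derivative (inner (y - x) (G (x + 0 *\<^sub>R (y - x))))) (at 0)"
    unfolding \<phi>_def by (rule line_deriv[OF d])
  ultimately have "\<phi> 1 - \<phi> 0 \<ge> inner (y - x) (G x) * (1 - 0)"
    by (intro convex_on_imp_above_tangent[where A=UNIV]) auto
  then show ?thesis unfolding \<phi>_def by (simp add: inner_commute)
qed

lemma bregman_sc:
  fixes f :: "'c::real_inner \<Rightarrow> real"
  assumes sc: "strongly_convex_mod \<rho> f" and c1: "C1_with_grad f g"
  shows "bregman f g y x \<ge> \<rho> / 2 * (norm (y - x))\<^sup>2"
proof -
  have d: "\<And>u. (f has_derivative (\<lambda>h. inner h (g u))) (at u)"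
    using c1 unfolding C1_with_grad_def gderiv_def by blast
  have cv: "convex_on UNIV (\<lambda>x. f x - \<rho> / 2 * inner x x)"
    using sc unfolding strongly_convex_mod_def by (simp add: power2_norm_eq_inner)
  have dd: "((\<lambda>x. f x - \<rho> / 2 * inner x x) has_derivative (\<lambda>h. inner h (g u - \<rho> *\<^sub>R u))) (at u)" for u
  proof -
    have i: "((\<lambda>x. inner x x) has_derivative (\<lambda>h. inner u h + inner h u)) (at u)"
      by (rule has_derivative_inner[OF has_derivative_ident has_derivative_ident])
    show ?thesis
      by (rule has_derivative_eq_rhs[OF has_derivative_diff[OF d has_derivative_mult_right[OF i]]])
         (auto simp: fun_eq_iff inner_diff_right inner_commute algebra_simps)
  qed
  from convex_grad[OF cv dd, of x y]
  show ?thesis unfolding bregman_def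
    by (simp add: power2_norm_eq_inner inner_diff_left inner_diff_right inner_commute algebra_simps)
qed

lemma lip_descent:
  fixes f :: "'c::real_inner \<Rightarrow> real"
  assumes d: "\<And>u. (f has_derivative (\<lambda>h. inner h (g u))) (at u)"
    and lip: "L-lipschitz_on UNIV g"
  shows "f y - f x - inner (g x) (y - x) \<ge> - L / 2 * (norm (y - x))\<^sup>2"
proof -
  define dd where "dd = y - x"
  define G where "G = (\<lambda>t. f (x + t *\<^sub>R dd) - t * inner (g x) dd + L / 2 * t\<^sup>2 * (norm dd)\<^sup>2)"
  have L0: "L \<ge> 0" using lip lipschitz_on_nonneg by blast
  have "G 0 \<le> G 1"
  proof (rule DERIV_nonneg_imp_nondecreasing[of 0 1 G])
    fix t :: real assume t: "0 \<le> t" "t \<le> 1"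
    have der: "(G has_real_derivative (inner dd (g (x + t *\<^sub>R dd)) - inner (g x) dd + L * t * (norm dd)\<^sup>2)) (at t)"
    proof -
      have a: "((\<lambda>t. f (x + t *\<^sub>R dd)) has_real_derivative (inner dd (g (x + t *\<^sub>R dd)))) (at t)"
        by (rule line_deriv[OF d])
      have b: "((\<lambda>t. t * inner (g x) dd) has_real_derivative inner (g x) dd) (at t)"
        by (auto intro!: derivative_eq_intros)
      have c: "((\<lambda>t. L / 2 * t\<^sup>2 * (norm dd)\<^sup>2) has_real_derivative L * t * (norm dd)\<^sup>2) (at t)"
        by (auto intro!: derivative_eq_intros)
      show ?thesis using DERIV_add[OF DERIV_diff[OF a b] c] by (simp add: G_def)
    qed
    have "norm (g (x + t *\<^sub>R dd) - g x) \<le> L * norm (t *\<^sub>R dd)"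
      using lipschitz_onD[OF lip, of "x + t *\<^sub>R dd" x] by (simp add: dist_norm)
    also have "\<dots> = L * t * norm dd" using t by simp
    finally have nb: "norm (g (x + t *\<^sub>R dd) - g x) \<le> L * t * norm dd" .
    have "\<bar>inner dd (g (x + t *\<^sub>R dd) - g x)\<bar> \<le> norm dd * norm (g (x + t *\<^sub>R dd) - g x)"
      by (rule Cauchy_Schwarz_ineq2)
    also have "\<dots> \<le> norm dd * (L * t * norm dd)" by (rule mult_left_mono[OF nb]) simp
    finally have "inner dd (g (x + t *\<^sub>R dd) - g x) \<ge> - (L * t * (norm dd)\<^sup>2)"
      by (simp add: power2_eq_square algebra_simps)
    then have "inner dd (g (x + t *\<^sub>R dd)) - inner (g x) dd + L * t * (norm dd)\<^sup>2 \<ge> 0"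
      by (simp add: inner_diff_right inner_commute)
    with der show "\<exists>y. (G has_real_derivative y) (at t) \<and> 0 \<le> y" by blast
  qed simp
  then show ?thesis unfolding G_def dd_def by simp
qed

lemma key_const:
  fixes \<rho> \<alpha> \<alpha>b \<beta> \<beta>b \<epsilon> L lp \<delta> \<tau> :: real
  assumes "0 < \<rho>" "0 \<le> \<alpha>" "\<alpha> \<le> \<alpha>b" "0 < \<alpha>b" "\<alpha>b < (1 - \<epsilon>) * \<rho> / 2"
    "0 \<le> \<beta>" "\<beta> \<le> \<beta>b" "0 < \<beta>b" "0 \<le> L" "L \<le> lp" "0 < lp" "0 < \<epsilon>"
    "\<delta> = (\<alpha>b + \<beta>b * \<rho>) / ((1 - \<epsilon>) * \<rho> - 2 * \<alpha>b) * lp"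
    "\<tau> = ((1 + \<epsilon>) * \<delta> + (1 + \<beta>) * L) / (\<rho> - \<alpha>)"
  shows "0 < \<delta>" "\<tau> * (\<rho> - \<alpha>) = (1 + \<epsilon>) * \<delta> + (1 + \<beta>) * L"
    "L * \<beta> + \<tau> * \<alpha> \<le> (1 - \<epsilon>) * \<delta>" "0 \<le> \<tau>"
proof -
  have p: "0 < (1 - \<epsilon>) * \<rho>" using assms(4,5) by linarith
  have e1: "\<epsilon> < 1" using p assms(1) by (simp add: zero_less_mult_iff)
  have den: "(1 - \<epsilon>) * \<rho> - 2 * \<alpha>b > 0" using assms(5) by simp
  have er: "\<epsilon> * \<rho> > 0" using assms(1,12) by simp
  have ra: "\<rho> - \<alpha> > 0" using assms(3,4,5) er by (simp add: algebra_simps)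
  have nu: "0 < \<alpha>b + \<beta>b * \<rho>" using assms(4,8,1) by (simp add: add_pos_pos)
  show dpos: "0 < \<delta>" unfolding assms(13) using nu den assms(11) by (intro mult_pos_pos divide_pos_pos)
  show tr: "\<tau> * (\<rho> - \<alpha>) = (1 + \<epsilon>) * \<delta> + (1 + \<beta>) * L" using assms(14) ra by simp
  show "0 \<le> \<tau>" using assms(14) ra dpos assms(12,6,9) by simp
  have dd: "\<delta> * ((1 - \<epsilon>) * \<rho> - 2 * \<alpha>b) = (\<alpha>b + \<beta>b * \<rho>) * lp"
    using assms(13) den by simp
  have "L * (\<beta> * \<rho> + \<alpha>) \<le> lp * (\<beta>b * \<rho> + \<alpha>b)"
    using assms by (intro mult_mono add_mono mult_right_mono) auto
  also have "\<dots> = \<delta> * ((1 - \<epsilon>) * \<rho> - 2 * \<alpha>b)" using dd by simp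
  also have "\<dots> \<le> \<delta> * ((1 - \<epsilon>) * \<rho> - 2 * \<alpha>)" using dpos assms(3) by simp
  finally have m: "L * (\<beta> * \<rho> + \<alpha>) \<le> \<delta> * ((1 - \<epsilon>) * \<rho> - 2 * \<alpha>)" .
  have "(L * \<beta> + \<tau> * \<alpha>) * (\<rho> - \<alpha>) = L * \<beta> * (\<rho> - \<alpha>) + \<alpha> * ((1 + \<epsilon>) * \<delta> + (1 + \<beta>) * L)"
    using tr by (simp add: algebra_simps)
  also have "\<dots> \<le> (1 - \<epsilon>) * \<delta> * (\<rho> - \<alpha>)" using m by (simp add: algebra_simps)
  finally show "L * \<beta> + \<tau> * \<alpha> \<le> (1 - \<epsilon>) * \<delta>" using ra by simp
qed

lemma block:
  fixes x xm xp z t :: "'c::real_inner" and G :: "'c \<Rightarrow> 'c"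
  assumes prox: "T1 + p1 + (inner xp t + \<tau> * D) \<le> T0 + p0 + inner x t"
    and D: "D \<ge> \<rho> / 2 * (norm (xp - x))\<^sup>2"
    and desc: "f1 - f0 - inner (G x) (xp - x) \<ge> - L / 2 * (norm (xp - x))\<^sup>2"
    and lip: "norm (G z - G x) \<le> L * norm (z - x)"
    and z: "z = x + \<beta> *\<^sub>R (x - xm)" and t: "t = - G z - \<tau> *\<^sub>R (\<alpha> *\<^sub>R (x - xm))"
    and k: "\<tau> * (\<rho> - \<alpha>) = (1 + \<epsilon>) * \<delta> + (1 + \<beta>) * L" "L * \<beta> + \<tau> * \<alpha> \<le> (1 - \<epsilon>) * \<delta>"
      "0 \<le> \<tau>" "0 \<le> \<alpha>" "0 \<le> \<beta>" "0 \<le> L"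
  shows "(T1 + p1 - f1) - (T0 + p0 - f0) \<le> - (1 + \<epsilon>) * \<delta> / 2 * (norm (xp - x))\<^sup>2 + (1 - \<epsilon>) * \<delta> / 2 * (norm (x - xm))\<^sup>2"
proof -
  define a where "a = norm (xp - x)"
  define b where "b = norm (x - xm)"
  have a0: "a \<ge> 0" "b \<ge> 0" by (auto simp: a_def b_def)
  define c where "c = inner (xp - x) (x - xm)"
  have c: "c \<le> a * b" unfolding c_def a_def b_def by (metis Cauchy_Schwarz_ineq2 abs_le_D1)
  define e where "e = inner (xp - x) (G z - G x)"
  have "e \<le> a * norm (G z - G x)" unfolding e_def a_def by (metis Cauchy_Schwarz_ineq2 abs_le_D1)
  also have "\<dots> \<le> a * (L * (\<beta> * b))" using lip a0 z k(5) by (intro mult_left_mono) (auto simp: b_def)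
  finally have e: "e \<le> a * (L * (\<beta> * b))" .
  have it: "inner xp t - inner x t = - inner (xp - x) (G z) - \<tau> * \<alpha> * c"
    unfolding t c_def by (simp add: inner_diff_left inner_diff_right inner_minus_right algebra_simps)
  have s1: "(T1 + p1 - f1) - (T0 + p0 - f0) \<le> e + \<tau> * \<alpha> * c - \<tau> * D + L / 2 * a\<^sup>2"
    using prox desc it unfolding e_def a_def by (simp add: inner_diff_right inner_commute algebra_simps)
  have h1: "e \<le> L * \<beta> * (a * b)" using e by (simp add: mult_ac)
  have h3: "\<tau> * D \<ge> \<tau> * (\<rho> / 2 * a\<^sup>2)" using D k(3) unfolding a_def by (intro mult_left_mono) auto
  have h2: "\<tau> * \<alpha> * c \<le> \<tau> * \<alpha> * (a * b)" using c k(3,4) by (intro mult_left_mono) auto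
  have "0 \<le> (a - b)\<^sup>2" by simp
  then have ab: "2 * (a * b) \<le> a\<^sup>2 + b\<^sup>2" by (simp add: power2_diff)
  have h4: "(L * \<beta> + \<tau> * \<alpha>) * (2 * (a * b)) \<le> (L * \<beta> + \<tau> * \<alpha>) * (a\<^sup>2 + b\<^sup>2)"
    using ab k by (intro mult_left_mono) auto
  have h5: "(L * \<beta> + \<tau> * \<alpha>) * b\<^sup>2 \<le> (1 - \<epsilon>) * \<delta> * b\<^sup>2"
    using k(2) by (intro mult_right_mono) auto
  define P where "P = L * \<beta> + \<tau> * \<alpha>"
  have h4': "P * (a * b) \<le> P / 2 * a\<^sup>2 + P / 2 * b\<^sup>2"
  proof -
    have q1: "P * (2 * (a * b)) = 2 * (P * (a * b))" by simp
    have q2: "P * (a\<^sup>2 + b\<^sup>2) = 2 * (P / 2 * a\<^sup>2) + 2 * (P / 2 * b\<^sup>2)" by (simp add: distrib_left)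
    show ?thesis using h4 q1 q2 unfolding P_def[symmetric] by linarith
  qed
  have h12: "e + \<tau> * \<alpha> * c \<le> P * (a * b)" using h1 h2 unfolding P_def by (simp add: algebra_simps)
  have h3': "\<tau> * D \<ge> \<tau> * \<rho> / 2 * a\<^sup>2" using h3 by simp
  have h5': "P / 2 * b\<^sup>2 \<le> (1 - \<epsilon>) * \<delta> / 2 * b\<^sup>2" using h5 unfolding P_def by simp
  have kk: "- (1 + \<epsilon>) * \<delta> / 2 * a\<^sup>2 = P / 2 * a\<^sup>2 - \<tau> * \<rho> / 2 * a\<^sup>2 + L / 2 * a\<^sup>2"
  proof -
    have "- (1 + \<epsilon>) * \<delta> = P - \<tau> * \<rho> + L" using k(1) unfolding P_def by (simp add: algebra_simps)
    then show ?thesis by (simp add: field_simps)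
  qed
  have "(T1 + p1 - f1) - (T0 + p0 - f0) \<le> - (1 + \<epsilon>) * \<delta> / 2 * a\<^sup>2 + (1 - \<epsilon>) * \<delta> / 2 * b\<^sup>2"
    using s1 h12 h4' h3' h5' kk by linarith
  then show ?thesis using k(1) unfolding a_def b_def by simp
qed


lemma partial1:
  assumes "C1_with_grad hm Gm"
  shows "((\<lambda>u. hm (u, v)) has_derivative (\<lambda>h. inner h (fst (Gm (u, v))))) (at u)"
proof -
  have d: "(hm has_derivative (\<lambda>h. inner h (Gm (u, v)))) (at (u, v))"
    using assms unfolding C1_with_grad_def gderiv_def by blast
  have l: "((\<lambda>u. (u, v)) has_derivative (\<lambda>h. (h, 0))) (at u)"
    by (auto intro!: derivative_eq_intros)
  obtain p q where pq: "Gm (u, v) = (p, q)" by fastforce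
  show ?thesis using has_derivative_compose[OF l d]
    by (simp add: o_def pq inner_commute)
qed

lemma partial2:
  assumes "C1_with_grad hm Gm"
  shows "((\<lambda>v. hm (u, v)) has_derivative (\<lambda>h. inner h (snd (Gm (u, v))))) (at v)"
proof -
  have d: "(hm has_derivative (\<lambda>h. inner h (Gm (u, v)))) (at (u, v))"
    using assms unfolding C1_with_grad_def gderiv_def by blast
  have l: "((\<lambda>v. (u, v)) has_derivative (\<lambda>h. (0, h))) (at v)"
    by (auto intro!: derivative_eq_intros)
  obtain p q where pq: "Gm (u, v) = (p, q)" by fastforce
  show ?thesis using has_derivative_compose[OF l d]
    by (simp add: o_def pq inner_commute)
qed

theorem lemma1:
  fixes \<theta>1 :: "'a::euclidean_space \<Rightarrow> ereal" and \<theta>2 :: "'b::euclidean_space \<Rightarrow> ereal"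
    and hp hm :: "'a \<times> 'b \<Rightarrow> real" and Gp Gm :: "'a \<times> 'b \<Rightarrow> 'a \<times> 'b"
    and \<psi> :: "nat \<Rightarrow> 'a \<Rightarrow> real" and g\<psi> :: "nat \<Rightarrow> 'a \<Rightarrow> 'a"
    and \<phi> :: "nat \<Rightarrow> 'b \<Rightarrow> real" and g\<phi> :: "nat \<Rightarrow> 'b \<Rightarrow> 'b"
    and \<rho>1 \<rho>2 :: real
    and L1 :: "'b \<Rightarrow> real" and L2 :: "'a \<Rightarrow> real"
    and lam1m lam1p lam2m lam2p :: real
    and \<epsilon> \<alpha>b1 \<alpha>b2 \<beta>b1 \<beta>b2 \<delta>1 \<delta>2 \<delta> :: real
    and \<alpha>1 \<alpha>2 \<beta>1 \<beta>2 \<tau>1 \<tau>2 :: "nat \<Rightarrow> real"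
    and x1 y1 z1 t1 :: "nat \<Rightarrow> 'a" and x2 y2 z2 t2 :: "nat \<Rightarrow> 'b"
  \<comment> \<open>smooth parts h = h^+ - h^-, continuously differentiable with gradients Gp, Gm\<close>
  assumes hp_C1: "C1_with_grad hp Gp" and hm_C1: "C1_with_grad hm Gm"
  \<comment> \<open>kernels: strongly convex (moduli at least rho1, rho2), continuously differentiable\<close>
    and rho_pos: "\<rho>1 > 0" "\<rho>2 > 0"
    and psi_C1: "\<And>k. C1_with_grad (\<psi> k) (g\<psi> k)"
    and phi_C1: "\<And>k. C1_with_grad (\<phi> k) (g\<phi> k)"
    and psi_sc: "\<And>k. strongly_convex_mod \<rho>1 (\<psi> k)"
    and phi_sc: "\<And>k. strongly_convex_mod \<rho>2 (\<phi> k)"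
  \<comment> \<open>Assumption A1\<close>
    and A1: "proper_fun \<theta>1" "lsc_fun \<theta>1" "proper_fun \<theta>2" "lsc_fun \<theta>2"
      "\<exists>m. \<forall>z. Phi \<theta>1 \<theta>2 (\<lambda>z. hp z - hm z) z \<ge> ereal m"
  \<comment> \<open>Assumption A2\<close>
    and A2i: "\<And>v. (L1 v)-lipschitz_on UNIV (\<lambda>u. fst (Gm (u, v)))"
      "\<And>u. (L2 u)-lipschitz_on UNIV (\<lambda>v. snd (Gm (u, v)))"
    and A2ii: "lam1m > 0" "lam1p > 0" "lam2m > 0" "lam2p > 0"
      "\<And>k. lam1m \<le> L1 (x2 k)" "\<And>k. L1 (x2 k) \<le> lam1p"
      "\<And>k. lam2m \<le> L2 (x1 k)" "\<And>k. L2 (x1 k) \<le> lam2p"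
    and A2iii: "\<And>S. bounded S \<Longrightarrow> \<exists>C. C-lipschitz_on S (\<lambda>z. Gp z - Gm z)"
  \<comment> \<open>Assumption A3\<close>
    and eps_pos: "\<epsilon> > 0"
    and A3_alpha: "0 < \<alpha>b1" "\<alpha>b1 < (1 - \<epsilon>) * \<rho>1 / 2" "0 < \<alpha>b2" "\<alpha>b2 < (1 - \<epsilon>) * \<rho>2 / 2"
      "\<And>k. 0 \<le> \<alpha>1 k \<and> \<alpha>1 k \<le> \<alpha>b1" "\<And>k. 0 \<le> \<alpha>2 k \<and> \<alpha>2 k \<le> \<alpha>b2"
    and A3_beta: "0 < \<beta>b1" "0 < \<beta>b2"
      "\<And>k. 0 \<le> \<beta>1 k \<and> \<beta>1 k \<le> \<beta>b1" "\<And>k. 0 \<le> \<beta>2 k \<and> \<beta>2 k \<le> \<beta>b2"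
    and delta1_def: "\<delta>1 = (\<alpha>b1 + \<beta>b1 * \<rho>1) / ((1 - \<epsilon>) * \<rho>1 - 2 * \<alpha>b1) * lam1p"
    and delta2_def: "\<delta>2 = (\<alpha>b2 + \<beta>b2 * \<rho>2) / ((1 - \<epsilon>) * \<rho>2 - 2 * \<alpha>b2) * lam2p"
    and tau1_def: "\<And>k. \<tau>1 k = ((1 + \<epsilon>) * \<delta>1 + (1 + \<beta>1 k) * L1 (x2 k)) / (\<rho>1 - \<alpha>1 k)"
    and tau2_def: "\<And>k. \<tau>2 k = ((1 + \<epsilon>) * \<delta>2 + (1 + \<beta>2 k) * L2 (x1 (Suc k))) / (\<rho>2 - \<alpha>2 k)"
  \<comment> \<open>the algorithm; x^{-1} := x^0 is encoded by natural-number subtraction (0 - 1 = 0)\<close>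
    and y1_def: "\<And>k. y1 k = x1 k + \<alpha>1 k *\<^sub>R (x1 k - x1 (k - 1))"
    and z1_def: "\<And>k. z1 k = x1 k + \<beta>1 k *\<^sub>R (x1 k - x1 (k - 1))"
    and t1_def: "\<And>k. t1 k = - fst (Gm (z1 k, x2 k)) - \<tau>1 k *\<^sub>R (y1 k - x1 k)"
    and x1_step: "\<And>k. x1 (Suc k) \<in>
       bregman_prox (\<lambda>u. \<theta>1 u + ereal (hp (u, x2 k))) (\<tau>1 k) (\<psi> k) (g\<psi> k) (x1 k) (t1 k)"
    and y2_def: "\<And>k. y2 k = x2 k + \<alpha>2 k *\<^sub>R (x2 k - x2 (k - 1))"
    and z2_def: "\<And>k. z2 k = x2 k + \<beta>2 k *\<^sub>R (x2 k - x2 (k - 1))"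
    and t2_def: "\<And>k. t2 k = - snd (Gm (x1 (Suc k), z2 k)) - \<tau>2 k *\<^sub>R (y2 k - x2 k)"
    and x2_step: "\<And>k. x2 (Suc k) \<in>
       bregman_prox (\<lambda>v. \<theta>2 v + ereal (hp (x1 (Suc k), v))) (\<tau>2 k) (\<phi> k) (g\<phi> k) (x2 k) (t2 k)"
    and delta_def: "\<delta> = \<epsilon> / 2 * min \<delta>1 \<delta>2"
  shows "\<delta> > 0 \<and>
    decseq (\<lambda>k. Theta (Phi \<theta>1 \<theta>2 (\<lambda>z. hp z - hm z)) \<delta>1 \<delta>2
                   ((x1 k, x2 k), (x1 (k - 1), x2 (k - 1)))) \<and>
    (\<forall>k. Theta (Phi \<theta>1 \<theta>2 (\<lambda>z. hp z - hm z)) \<delta>1 \<delta>2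
             ((x1 (Suc k), x2 (Suc k)), (x1 k, x2 k))
         + ereal (\<delta> * (norm (((x1 (Suc k), x2 (Suc k)), (x1 k, x2 k))
                            - ((x1 k, x2 k), (x1 (k - 1), x2 (k - 1)))))\<^sup>2)
         \<le> Theta (Phi \<theta>1 \<theta>2 (\<lambda>z. hp z - hm z)) \<delta>1 \<delta>2
             ((x1 k, x2 k), (x1 (k - 1), x2 (k - 1))))"
proof -
  let ?\<Phi> = "Phi \<theta>1 \<theta>2 (\<lambda>z. hp z - hm z)"
  let ?Th = "\<lambda>k. Theta ?\<Phi> \<delta>1 \<delta>2 ((x1 k, x2 k), (x1 (k - 1), x2 (k - 1)))"
  have L1nn: "\<And>k. 0 \<le> L1 (x2 k)" using A2ii(1,5) by (meson less_le_trans less_imp_le)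
  have L2nn: "\<And>k. 0 \<le> L2 (x1 k)" using A2ii(3,7) by (meson less_le_trans less_imp_le)
  have K1: "\<And>k. 0 < \<delta>1 \<and> \<tau>1 k * (\<rho>1 - \<alpha>1 k) = (1 + \<epsilon>) * \<delta>1 + (1 + \<beta>1 k) * L1 (x2 k)
     \<and> L1 (x2 k) * \<beta>1 k + \<tau>1 k * \<alpha>1 k \<le> (1 - \<epsilon>) * \<delta>1 \<and> 0 \<le> \<tau>1 k"
    using key_const[OF rho_pos(1) _ _ A3_alpha(1,2) _ _ A3_beta(1) L1nn A2ii(6) A2ii(2) eps_pos delta1_def tau1_def]
      A3_alpha(5) A3_beta(3) by blast
  have K2: "\<And>k. 0 < \<delta>2 \<and> \<tau>2 k * (\<rho>2 - \<alpha>2 k) = (1 + \<epsilon>) * \<delta>2 + (1 + \<beta>2 k) * L2 (x1 (Suc k))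
     \<and> L2 (x1 (Suc k)) * \<beta>2 k + \<tau>2 k * \<alpha>2 k \<le> (1 - \<epsilon>) * \<delta>2 \<and> 0 \<le> \<tau>2 k"
    using key_const[OF rho_pos(2) _ _ A3_alpha(3,4) _ _ A3_beta(2) L2nn A2ii(8) A2ii(4) eps_pos delta2_def tau2_def]
      A3_alpha(6) A3_beta(4) by blast
  have d1: "\<delta>1 > 0" using K1 by blast
  have d2: "\<delta>2 > 0" using K2 by blast
  have dpos: "\<delta> > 0" unfolding delta_def using d1 d2 eps_pos by simp
  have main: "?Th (Suc k) + ereal (\<delta> * (norm (((x1 (Suc k), x2 (Suc k)), (x1 k, x2 k))
                            - ((x1 k, x2 k), (x1 (k - 1), x2 (k - 1)))))\<^sup>2) \<le> ?Th k" for k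
  proof (cases "?Th k = \<infinity>")
    case True then show ?thesis by simp
  next
    case False
    have ne1: "\<And>x. \<theta>1 x \<noteq> -\<infinity>" and ne2: "\<And>x. \<theta>2 x \<noteq> -\<infinity>"
      using A1(1,3) unfolding proper_fun_def by auto
    have "\<theta>1 (x1 k) \<noteq> \<infinity> \<and> \<theta>2 (x2 k) \<noteq> \<infinity>"
    proof (rule ccontr)
      assume "\<not> ?thesis"
      then have "?Th k = \<infinity>" unfolding Theta_def Phi_def using ne1 ne2 by auto
      with False show False by simp
    qed
    then obtain T10 T20 where T10: "\<theta>1 (x1 k) = ereal T10" and T20: "\<theta>2 (x2 k) = ereal T20"
      using ne1 ne2 by (metis ereal_cases)
    have P1: "\<theta>1 (x1 (Suc k)) + ereal (hp (x1 (Suc k), x2 k)) + ereal (inner (x1 (Suc k)) (t1 k) + \<tau>1 k * bregman (\<psi> k) (g\<psi> k) (x1 (Suc k)) (x1 k))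
       \<le> \<theta>1 (x1 k) + ereal (hp (x1 k, x2 k)) + ereal (inner (x1 k) (t1 k))"
    proof -
      have "\<forall>y. \<theta>1 (x1 (Suc k)) + ereal (hp (x1 (Suc k), x2 k)) + ereal (inner (x1 (Suc k)) (t1 k) + \<tau>1 k * bregman (\<psi> k) (g\<psi> k) (x1 (Suc k)) (x1 k))
         \<le> \<theta>1 y + ereal (hp (y, x2 k)) + ereal (inner y (t1 k) + \<tau>1 k * bregman (\<psi> k) (g\<psi> k) y (x1 k))"
        using x1_step[of k] unfolding bregman_prox_def by blast
      from spec[OF this, of "x1 k"] show ?thesis by (simp add: bregman_def)
    qed
    have "\<theta>1 (x1 (Suc k)) \<noteq> \<infinity>"
    proof
      assume "\<theta>1 (x1 (Suc k)) = \<infinity>"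
      with P1 T10 show False by simp
    qed
    then obtain T11 where T11: "\<theta>1 (x1 (Suc k)) = ereal T11" using ne1 by (metis ereal_cases)
    have P1r: "T11 + hp (x1 (Suc k), x2 k) + (inner (x1 (Suc k)) (t1 k) + \<tau>1 k * bregman (\<psi> k) (g\<psi> k) (x1 (Suc k)) (x1 k))
       \<le> T10 + hp (x1 k, x2 k) + inner (x1 k) (t1 k)"
      using P1 T10 T11 by simp
    have P2: "\<theta>2 (x2 (Suc k)) + ereal (hp (x1 (Suc k), x2 (Suc k))) + ereal (inner (x2 (Suc k)) (t2 k) + \<tau>2 k * bregman (\<phi> k) (g\<phi> k) (x2 (Suc k)) (x2 k))
       \<le> \<theta>2 (x2 k) + ereal (hp (x1 (Suc k), x2 k)) + ereal (inner (x2 k) (t2 k))"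
    proof -
      have "\<forall>y. \<theta>2 (x2 (Suc k)) + ereal (hp (x1 (Suc k), x2 (Suc k))) + ereal (inner (x2 (Suc k)) (t2 k) + \<tau>2 k * bregman (\<phi> k) (g\<phi> k) (x2 (Suc k)) (x2 k))
         \<le> \<theta>2 y + ereal (hp (x1 (Suc k), y)) + ereal (inner y (t2 k) + \<tau>2 k * bregman (\<phi> k) (g\<phi> k) y (x2 k))"
        using x2_step[of k] unfolding bregman_prox_def by blast
      from spec[OF this, of "x2 k"] show ?thesis by (simp add: bregman_def)
    qed
    have "\<theta>2 (x2 (Suc k)) \<noteq> \<infinity>"
    proof
      assume "\<theta>2 (x2 (Suc k)) = \<infinity>"
      with P2 T20 show False by simp
    qed
    then obtain T21 where T21: "\<theta>2 (x2 (Suc k)) = ereal T21" using ne2 by (metis ereal_cases)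
    have P2r: "T21 + hp (x1 (Suc k), x2 (Suc k)) + (inner (x2 (Suc k)) (t2 k) + \<tau>2 k * bregman (\<phi> k) (g\<phi> k) (x2 (Suc k)) (x2 k))
       \<le> T20 + hp (x1 (Suc k), x2 k) + inner (x2 k) (t2 k)"
      using P2 T20 T21 by simp
    have B1: "(T11 + hp (x1 (Suc k), x2 k) - hm (x1 (Suc k), x2 k)) - (T10 + hp (x1 k, x2 k) - hm (x1 k, x2 k))
      \<le> - (1 + \<epsilon>) * \<delta>1 / 2 * (norm (x1 (Suc k) - x1 k))\<^sup>2 + (1 - \<epsilon>) * \<delta>1 / 2 * (norm (x1 k - x1 (k - 1)))\<^sup>2"
    proof (rule block[where G = "\<lambda>u. fst (Gm (u, x2 k))" and L = "L1 (x2 k)" and \<rho> = \<rho>1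
          and \<beta> = "\<beta>1 k" and \<alpha> = "\<alpha>1 k" and \<tau> = "\<tau>1 k", OF P1r])
      show "\<rho>1 / 2 * (norm (x1 (Suc k) - x1 k))\<^sup>2 \<le> bregman (\<psi> k) (g\<psi> k) (x1 (Suc k)) (x1 k)"
        by (rule bregman_sc[OF psi_sc psi_C1])
      show "- L1 (x2 k) / 2 * (norm (x1 (Suc k) - x1 k))\<^sup>2
        \<le> hm (x1 (Suc k), x2 k) - hm (x1 k, x2 k) - inner (fst (Gm (x1 k, x2 k))) (x1 (Suc k) - x1 k)"
        by (rule lip_descent[OF partial1[OF hm_C1] A2i(1)])
      show "norm (fst (Gm (z1 k, x2 k)) - fst (Gm (x1 k, x2 k))) \<le> L1 (x2 k) * norm (z1 k - x1 k)"
        using lipschitz_onD[OF A2i(1), of "z1 k" "x1 k"] by (simp add: dist_norm)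
      show "z1 k = x1 k + \<beta>1 k *\<^sub>R (x1 k - x1 (k - 1))" by (rule z1_def)
      show "t1 k = - fst (Gm (z1 k, x2 k)) - \<tau>1 k *\<^sub>R (\<alpha>1 k *\<^sub>R (x1 k - x1 (k - 1)))"
        using t1_def y1_def by simp
    qed (use K1 A3_alpha(5) A3_beta(3) L1nn in auto)
    have B2: "(T21 + hp (x1 (Suc k), x2 (Suc k)) - hm (x1 (Suc k), x2 (Suc k))) - (T20 + hp (x1 (Suc k), x2 k) - hm (x1 (Suc k), x2 k))
      \<le> - (1 + \<epsilon>) * \<delta>2 / 2 * (norm (x2 (Suc k) - x2 k))\<^sup>2 + (1 - \<epsilon>) * \<delta>2 / 2 * (norm (x2 k - x2 (k - 1)))\<^sup>2"
    proof (rule block[where G = "\<lambda>v. snd (Gm (x1 (Suc k), v))" and L = "L2 (x1 (Suc k))" and \<rho> = \<rho>2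
          and \<beta> = "\<beta>2 k" and \<alpha> = "\<alpha>2 k" and \<tau> = "\<tau>2 k", OF P2r])
      show "\<rho>2 / 2 * (norm (x2 (Suc k) - x2 k))\<^sup>2 \<le> bregman (\<phi> k) (g\<phi> k) (x2 (Suc k)) (x2 k)"
        by (rule bregman_sc[OF phi_sc phi_C1])
      show "- L2 (x1 (Suc k)) / 2 * (norm (x2 (Suc k) - x2 k))\<^sup>2
        \<le> hm (x1 (Suc k), x2 (Suc k)) - hm (x1 (Suc k), x2 k) - inner (snd (Gm (x1 (Suc k), x2 k))) (x2 (Suc k) - x2 k)"
        by (rule lip_descent[OF partial2[OF hm_C1] A2i(2)])
      show "norm (snd (Gm (x1 (Suc k), z2 k)) - snd (Gm (x1 (Suc k), x2 k))) \<le> L2 (x1 (Suc k)) * norm (z2 k - x2 k)"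
        using lipschitz_onD[OF A2i(2), of "z2 k" "x2 k"] by (simp add: dist_norm)
      show "z2 k = x2 k + \<beta>2 k *\<^sub>R (x2 k - x2 (k - 1))" by (rule z2_def)
      show "t2 k = - snd (Gm (x1 (Suc k), z2 k)) - \<tau>2 k *\<^sub>R (\<alpha>2 k *\<^sub>R (x2 k - x2 (k - 1)))"
        using t2_def y2_def by simp
    qed (use K2 A3_alpha(6) A3_beta(4) L2nn in auto)
    define a1 where "a1 = (norm (x1 (Suc k) - x1 k))\<^sup>2"
    define a2 where "a2 = (norm (x2 (Suc k) - x2 k))\<^sup>2"
    define b1 where "b1 = (norm (x1 k - x1 (k - 1)))\<^sup>2"
    define b2 where "b2 = (norm (x2 k - x2 (k - 1)))\<^sup>2"
    have nn: "(norm (((x1 (Suc k), x2 (Suc k)), (x1 k, x2 k)) - ((x1 k, x2 k), (x1 (k - 1), x2 (k - 1)))))\<^sup>2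
       = a1 + a2 + b1 + b2"
      unfolding a1_def a2_def b1_def b2_def by (simp add: norm_Pair)
    have pos: "0 \<le> a1" "0 \<le> a2" "0 \<le> b1" "0 \<le> b2" by (auto simp: a1_def a2_def b1_def b2_def)
    have dl1: "\<delta> \<le> \<epsilon> / 2 * \<delta>1" and dl2: "\<delta> \<le> \<epsilon> / 2 * \<delta>2" unfolding delta_def
      using eps_pos by (auto intro: mult_left_mono)
    have "\<delta> * (a1 + a2 + b1 + b2) = \<delta> * (a1 + b1) + \<delta> * (a2 + b2)" by (simp add: algebra_simps)
    also have "\<dots> \<le> \<epsilon> / 2 * \<delta>1 * (a1 + b1) + \<epsilon> / 2 * \<delta>2 * (a2 + b2)"
      using dl1 dl2 pos by (intro add_mono mult_right_mono) auto
    finally have dsum: "\<delta> * (a1 + a2 + b1 + b2) \<le> \<epsilon> / 2 * \<delta>1 * (a1 + b1) + \<epsilon> / 2 * \<delta>2 * (a2 + b2)" .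
    have B1': "(T11 + hp (x1 (Suc k), x2 k) - hm (x1 (Suc k), x2 k)) - (T10 + hp (x1 k, x2 k) - hm (x1 k, x2 k))
      \<le> - (1 + \<epsilon>) * \<delta>1 / 2 * a1 + (1 - \<epsilon>) * \<delta>1 / 2 * b1" using B1 unfolding a1_def b1_def .
    have B2': "(T21 + hp (x1 (Suc k), x2 (Suc k)) - hm (x1 (Suc k), x2 (Suc k))) - (T20 + hp (x1 (Suc k), x2 k) - hm (x1 (Suc k), x2 k))
      \<le> - (1 + \<epsilon>) * \<delta>2 / 2 * a2 + (1 - \<epsilon>) * \<delta>2 / 2 * b2" using B2 unfolding a2_def b2_def .
    have e1: "- (1 + \<epsilon>) * \<delta>1 / 2 * a1 + (1 - \<epsilon>) * \<delta>1 / 2 * b1 + \<delta>1 / 2 * a1 - \<delta>1 / 2 * b1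
       = - (\<epsilon> / 2 * \<delta>1 * (a1 + b1))" by (simp add: field_simps)
    have e2: "- (1 + \<epsilon>) * \<delta>2 / 2 * a2 + (1 - \<epsilon>) * \<delta>2 / 2 * b2 + \<delta>2 / 2 * a2 - \<delta>2 / 2 * b2
       = - (\<epsilon> / 2 * \<delta>2 * (a2 + b2))" by (simp add: field_simps)
    have real: "(T11 + (hp (x1 (Suc k), x2 (Suc k)) - hm (x1 (Suc k), x2 (Suc k))) + T21) + (\<delta>1 / 2 * a1 + \<delta>2 / 2 * a2)
        + \<delta> * (a1 + a2 + b1 + b2)
      \<le> (T10 + (hp (x1 k, x2 k) - hm (x1 k, x2 k)) + T20) + (\<delta>1 / 2 * b1 + \<delta>2 / 2 * b2)"
      using B1' B2' e1 e2 dsum by linarith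
    show ?thesis
      unfolding Theta_def Phi_def nn
      using real T10 T20 T11 T21 by (simp add: a1_def a2_def b1_def b2_def)
  qed
  have dec: "decseq ?Th"
  proof (rule decseq_SucI)
    fix k
    have "?Th (Suc k) \<le> ?Th (Suc k) + ereal (\<delta> * (norm (((x1 (Suc k), x2 (Suc k)), (x1 k, x2 k))
                            - ((x1 k, x2 k), (x1 (k - 1), x2 (k - 1)))))\<^sup>2)"
      using dpos by (intro ereal_le_add_self) simp
    also have "\<dots> \<le> ?Th k" by (rule main)
    finally show "?Th (Suc k) \<le> ?Th k" .
  qed
  show ?thesis using dpos dec main by simp
qed

end
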